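(* Let $\sigma$ be as in the context with the exponent $\alpha$ of condition $(\Sigma3)$ satisfying $\alpha>1$. Then $$\widehat{\phi_\sigma}(0)=1,\qquad \widehat{\phi_\sigma}(2\pi k)=0\ \text{ for all } k\in\mathbb Z\setminus\{0\},\qquad [\widehat{\phi_\sigma}]'(0)=0.$$
   Context: $\sigma:\mathbb R\to\mathbb R$ is a non-decreasing sigmoidal function ($\lim_{x\to-\infty}\sigma(x)=0$, $\lim_{x\to+\infty}\sigma(x)=1$) satisfying: $(\Sigma1)$ $\sigma(x)-1/2$ is odd; $(\Sigma2)$ $\sigma\in C^2(\mathbb R)$ and concave on $[0,+\infty)$; $(\Sigma3)$ $\sigma(x)=\mathcal O(|x|^{-1-\alpha})$ as $x\to-\infty$ for some $\alpha>0$. $\phi_\sigma(x):=\frac12[\sigma(x+1)-\sigma(x-1)]$, $x\in\mathbb R$. The Fourier transform of $g\in L^1(\mathbb R)$ is $\widehat g(v):=\int_{\mathbb R}g(x)e^{-ixv}\,dx$. *)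

theory Defs
  imports "HOL-Analysis.Analysis" "HOL-Library.Landau_Symbols"
begin

definition sigmoidal :: "(real \<Rightarrow> real) \<Rightarrow> bool" where
  "sigmoidal \<sigma> \<longleftrightarrow> mono \<sigma> \<and> (\<sigma> \<longlongrightarrow> 0) at_bot \<and> (\<sigma> \<longlongrightarrow> 1) at_top"

definition C2_real :: "(real \<Rightarrow> real) \<Rightarrow> bool" where
  "C2_real f \<longleftrightarrow> (\<forall>x. f differentiable at x) \<and> (\<forall>x. deriv f differentiable at x)
      \<and> continuous_on UNIV (deriv (deriv f))"

definition phi_sigma :: "(real \<Rightarrow> real) \<Rightarrow> real \<Rightarrow> real" where
  "phi_sigma \<sigma> x = (\<sigma> (x + 1) - \<sigma> (x - 1)) / 2"

definition fourier :: "(real \<Rightarrow> real) \<Rightarrow> real \<Rightarrow> complex" where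
  "fourier g v = (LINT x|lborel. complex_of_real (g x) * exp (- \<i> * complex_of_real (x * v)))"

end

theory Submission
  imports Defs
begin

lemma tail_integrable:
  fixes p R :: real
  assumes "p < -1" "R > 0"
  shows "integrable lborel (\<lambda>x. indicator {R..} x *\<^sub>R x powr p)"
proof -
  have "(\<lambda>x. x powr p) integrable_on {R..}"
    using has_integral_powr_to_inf[OF assms] by blast
  then have "(\<lambda>x. x powr p) absolutely_integrable_on {R..}"
    by (rule nonnegative_absolutely_integrable_1) auto
  then have "integrable lebesgue (\<lambda>x. indicator {R..} x *\<^sub>R x powr p)"
    by (simp add: absolutely_integrable_on_def set_integrable_def)
  moreover have meas: "(\<lambda>x. indicator {R..} x *\<^sub>R x powr p) \<in> borel_measurable lborel"
    by measurable
  ultimately show ?thesis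
    using integrable_completion[OF meas] by simp
qed

lemma tail_integrable_abs:
  fixes p R :: real
  assumes "p < -1" "R > 0"
  shows "integrable lborel (\<lambda>x. indicator {R..} \<bar>x\<bar> * \<bar>x\<bar> powr p)"
proof -
  have i1: "integrable lborel (\<lambda>x. indicator {R..} x *\<^sub>R x powr p)"
    by (rule tail_integrable[OF assms])
  have i2: "integrable lborel (\<lambda>x. indicator {R..} (0 + (-1) * x) *\<^sub>R (0 + (-1) * x) powr p)"
    using lborel_integrable_real_affine_iff[of "-1" "\<lambda>x. indicator {R..} x *\<^sub>R x powr p" 0] i1
    by simp
  have "integrable lborel (\<lambda>x. indicator {R..} x *\<^sub>R x powr p + indicator {R..} (0 + (-1) * x) *\<^sub>R (0 + (-1) * x) powr p)"
    using i1 i2 by (rule Bochner_Integration.integrable_add)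
  moreover have "indicator {R..} x *\<^sub>R x powr p + indicator {R..} (0 + (-1) * x) *\<^sub>R (0 + (-1) * x) powr p
      = indicator {R..} \<bar>x\<bar> * \<bar>x\<bar> powr p" for x
    using assms by (auto simp: indicator_def abs_if)
  ultimately show ?thesis by simp
qed

lemma sig_basic:
  fixes \<sigma> :: "real \<Rightarrow> real"
  assumes sig: "sigmoidal \<sigma>" and S1: "\<forall>x. \<sigma> (- x) - 1/2 = - (\<sigma> x - 1/2)"
  shows "0 \<le> \<sigma> x" "\<sigma> x \<le> 1" "\<sigma> (- x) = 1 - \<sigma> x"
proof -
  have mono: "mono \<sigma>" and l0: "(\<sigma> \<longlongrightarrow> 0) at_bot" and l1: "(\<sigma> \<longlongrightarrow> 1) at_top"
    using sig by (auto simp: sigmoidal_def)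
  have "eventually (\<lambda>y. \<sigma> y \<le> \<sigma> x) at_bot"
    using mono unfolding eventually_at_bot_linorder by (auto intro!: exI[of _ x] simp: mono_def)
  then show "0 \<le> \<sigma> x"
    using tendsto_upperbound[OF l0] by auto
  have "eventually (\<lambda>y. \<sigma> x \<le> \<sigma> y) at_top"
    using mono unfolding eventually_at_top_linorder by (auto intro!: exI[of _ x] simp: mono_def)
  then show "\<sigma> x \<le> 1"
    using tendsto_lowerbound[OF l1] by auto
  have "\<sigma> (- x) - 1/2 = - (\<sigma> x - 1/2)" using S1 by blast
  then show "\<sigma> (- x) = 1 - \<sigma> x" by linarith
qed

lemma cont_set_integrable:
  fixes h :: "real \<Rightarrow> 'a::{banach, second_countable_topology}"
  assumes "continuous_on UNIV h"
  shows "set_integrable lborel {a<..b} h"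
proof -
  have "set_integrable lborel {a..b} h"
    unfolding set_integrable_def
    by (rule borel_integrable_compact) (auto intro: continuous_on_subset[OF assms])
  then show ?thesis by (rule set_integrable_subset) auto
qed

lemma shift_set_integral:
  fixes h :: "real \<Rightarrow> complex"
  shows "(LINT x:{a<..b}|lborel. h (x + c)) = (LINT y:{a+c<..b+c}|lborel. h y)"
proof -
  have "(LINT y:{a+c<..b+c}|lborel. h y) = \<bar>1\<bar> *\<^sub>R (\<integral>x. indicator {a+c<..b+c} (c + 1 * x) *\<^sub>R h (c + 1 * x) \<partial>lborel)"
    unfolding set_lebesgue_integral_def
    by (rule lborel_integral_real_affine[where f="\<lambda>y. indicator {a+c<..b+c} y *\<^sub>R h y"]) simp
  also have "\<dots> = (LINT x:{a<..b}|lborel. h (x + c))"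
  proof -
    have "indicator {a+c<..b+c} (c + 1 * x) = (indicator {a<..b} x :: real)" for x
      by (auto simp: indicator_def)
    then show ?thesis
      unfolding set_lebesgue_integral_def by (simp add: add.commute)
  qed
  finally show ?thesis by simp
qed

lemma exp_period:
  fixes k m :: int
  shows "exp (- \<i> * complex_of_real ((x + of_int m) * (2 * pi * of_int k)))
       = exp (- \<i> * complex_of_real (x * (2 * pi * of_int k)))"
proof -
  have e1: "exp ((2 * of_int (m * k) * of_real pi) * \<i>) = 1"
    using exp_integer_2pi[of "of_int (m * k)"] by simp
  have "exp (- \<i> * complex_of_real ((x + of_int m) * (2 * pi * of_int k)))
     = exp (- \<i> * complex_of_real (x * (2 * pi * of_int k)) - (2 * of_int (m * k) * of_real pi) * \<i>)"
    by (rule arg_cong[where f=exp]) (simp add: algebra_simps)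
  also have "\<dots> = exp (- \<i> * complex_of_real (x * (2 * pi * of_int k))) / exp ((2 * of_int (m * k) * of_real pi) * \<i>)"
    by (rule exp_diff)
  also have "\<dots> = exp (- \<i> * complex_of_real (x * (2 * pi * of_int k)))"
    by (simp only: e1 div_by_1)
  finally show ?thesis .
qed

lemma phi_basic:
  fixes \<sigma> :: "real \<Rightarrow> real"
  assumes sig: "sigmoidal \<sigma>" and S1: "\<forall>x. \<sigma> (- x) - 1/2 = - (\<sigma> x - 1/2)"
  shows "0 \<le> phi_sigma \<sigma> x" "phi_sigma \<sigma> x \<le> 1/2" "phi_sigma \<sigma> (- x) = phi_sigma \<sigma> x"
proof -
  have mono: "mono \<sigma>" using sig by (auto simp: sigmoidal_def)
  then have "\<sigma> (x - 1) \<le> \<sigma> (x + 1)" by (auto simp: mono_def)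
  then show "0 \<le> phi_sigma \<sigma> x" by (simp add: phi_sigma_def)
  show "phi_sigma \<sigma> x \<le> 1/2"
    using sig_basic[OF sig S1, of "x+1"] sig_basic[OF sig S1, of "x-1"] by (simp add: phi_sigma_def)
  have "\<sigma> (- x + 1) = 1 - \<sigma> (x - 1)" using sig_basic(3)[OF sig S1, of "x - 1"] by simp
  moreover have "\<sigma> (- x - 1) = 1 - \<sigma> (x + 1)" using sig_basic(3)[OF sig S1, of "x + 1"] by simp
  ultimately show "phi_sigma \<sigma> (- x) = phi_sigma \<sigma> x" by (simp add: phi_sigma_def)
qed

lemma phi_decay:
  fixes \<sigma> :: "real \<Rightarrow> real"
  assumes sig: "sigmoidal \<sigma>" and S1: "\<forall>x. \<sigma> (- x) - 1/2 = - (\<sigma> x - 1/2)"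
    and S3: "\<sigma> \<in> O[at_bot](\<lambda>x. \<bar>x\<bar> powr (- 1 - \<alpha>))"
  obtains R D where "R > 0" "D > 0" "\<And>x. R \<le> \<bar>x\<bar> \<Longrightarrow> phi_sigma \<sigma> x \<le> D * \<bar>x\<bar> powr (- 1 - \<alpha>)"
proof -
  define q where "q = - 1 - \<alpha>"
  have mono: "mono \<sigma>" using sig by (auto simp: sigmoidal_def)
  obtain c where c: "c > 0" "eventually (\<lambda>x. norm (\<sigma> x) \<le> c * norm (\<bar>x\<bar> powr (- 1 - \<alpha>))) at_bot"
    using landau_o.bigE[OF S3] by blast
  then obtain M0 where M0: "\<And>x. x \<le> M0 \<Longrightarrow> norm (\<sigma> x) \<le> c * norm (\<bar>x\<bar> powr (- 1 - \<alpha>))"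
    unfolding eventually_at_bot_linorder by blast
  define M where "M = min M0 (-1)"
  define R where "R = 2 * (1 - M)"
  define D where "D = c / 2 powr q"
  have R: "R > 0" "R \<ge> 4" unfolding R_def M_def by auto
  have D: "D > 0" unfolding D_def using c by auto
  have neg: "phi_sigma \<sigma> x \<le> D * \<bar>x\<bar> powr q" if x: "x \<le> - R" for x
  proof -
    have "phi_sigma \<sigma> x \<le> \<sigma> (x + 1)"
      using sig_basic[OF sig S1, of "x - 1"] sig_basic[OF sig S1, of "x + 1"] by (simp add: phi_sigma_def)
    also have "\<dots> \<le> \<sigma> (x / 2)"
      using mono x R by (auto simp: mono_def)
    also have "\<dots> \<le> c * \<bar>x / 2\<bar> powr q"
    proof -
      have "x / 2 \<le> M0" using x unfolding R_def M_def by auto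
      from M0[OF this] show ?thesis by (simp add: q_def)
    qed
    also have "\<bar>x / 2\<bar> powr q = \<bar>x\<bar> powr q / 2 powr q"
      by (simp add: powr_divide)
    also have "c * (\<bar>x\<bar> powr q / 2 powr q) = D * \<bar>x\<bar> powr q"
      by (simp add: D_def)
    finally show ?thesis .
  qed
  have "phi_sigma \<sigma> x \<le> D * \<bar>x\<bar> powr q" if x: "R \<le> \<bar>x\<bar>" for x
  proof (cases "x \<le> 0")
    case True
    then show ?thesis using neg[of x] x by auto
  next
    case False
    then have "phi_sigma \<sigma> (- x) \<le> D * \<bar>- x\<bar> powr q" using neg[of "- x"] x by auto
    then show ?thesis using phi_basic(3)[OF sig S1, of x] by simp
  qed
  then show ?thesis using that R D unfolding q_def by blast
qed

lemma phi_moment_integrable: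
  fixes \<sigma> :: "real \<Rightarrow> real"
  assumes sig: "sigmoidal \<sigma>" and S1: "\<forall>x. \<sigma> (- x) - 1/2 = - (\<sigma> x - 1/2)"
    and S3: "\<sigma> \<in> O[at_bot](\<lambda>x. \<bar>x\<bar> powr (- 1 - \<alpha>))"
    and cont: "continuous_on UNIV \<sigma>" and g: "0 \<le> \<gamma>" "\<gamma> < \<alpha>"
  shows "integrable lborel (\<lambda>x. \<bar>x\<bar> powr \<gamma> * phi_sigma \<sigma> x)"
proof -
  have [measurable]: "\<sigma> \<in> borel_measurable borel" by (rule borel_measurable_continuous_onI[OF cont])
  obtain R D where RD: "R > 0" "D > 0" "\<And>x. R \<le> \<bar>x\<bar> \<Longrightarrow> phi_sigma \<sigma> x \<le> D * \<bar>x\<bar> powr (- 1 - \<alpha>)"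
    using phi_decay[OF sig S1 S3] by blast
  define B where "B x = indicator {-R..R} x * R powr \<gamma> + D * (indicator {R..} \<bar>x\<bar> * \<bar>x\<bar> powr (\<gamma> + (- 1 - \<alpha>)))" for x
  have "integrable lborel (\<lambda>x. indicator {-R..R} x * R powr \<gamma> + D * (indicator {R..} \<bar>x\<bar> * \<bar>x\<bar> powr (\<gamma> + (- 1 - \<alpha>))))"
    using tail_integrable_abs[of "\<gamma> + (- 1 - \<alpha>)" R] g RD by (intro Bochner_Integration.integrable_add) auto
  then have iB: "integrable lborel B" unfolding B_def .
  show ?thesis
  proof (rule Bochner_Integration.integrable_bound[OF iB])
    show "(\<lambda>x. \<bar>x\<bar> powr \<gamma> * phi_sigma \<sigma> x) \<in> borel_measurable lborel"
      unfolding phi_sigma_def by measurable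
    show "AE x in lborel. norm (\<bar>x\<bar> powr \<gamma> * phi_sigma \<sigma> x) \<le> norm (B x)"
    proof (rule AE_I2)
      fix x
      have p0: "0 \<le> phi_sigma \<sigma> x" and p1: "phi_sigma \<sigma> x \<le> 1/2" using phi_basic[OF sig S1] by auto
      have B0: "0 \<le> B x" using RD unfolding B_def by (auto simp: indicator_def)
      have "\<bar>x\<bar> powr \<gamma> * phi_sigma \<sigma> x \<le> B x"
      proof (cases "\<bar>x\<bar> \<le> R")
        case True
        have "\<bar>x\<bar> powr \<gamma> * phi_sigma \<sigma> x \<le> R powr \<gamma> * 1"
          using p0 p1 True g by (intro mult_mono powr_mono2) auto
        also have "\<dots> \<le> B x" using True RD unfolding B_def by (auto simp: indicator_def)
        finally show ?thesis .
      next
        case False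
        have "\<bar>x\<bar> powr \<gamma> * phi_sigma \<sigma> x \<le> \<bar>x\<bar> powr \<gamma> * (D * \<bar>x\<bar> powr (- 1 - \<alpha>))"
          using RD(3)[of x] False by (intro mult_left_mono) auto
        also have "\<dots> = D * \<bar>x\<bar> powr (\<gamma> + (- 1 - \<alpha>))"
          using False RD by (simp add: powr_add)
        also have "\<dots> \<le> B x" using False RD unfolding B_def by (auto simp: indicator_def)
        finally show ?thesis .
      qed
      then show "norm (\<bar>x\<bar> powr \<gamma> * phi_sigma \<sigma> x) \<le> norm (B x)"
        using p0 B0 by simp
    qed
  qed
qed

lemma phi_integrable:
  fixes \<sigma> :: "real \<Rightarrow> real"
  assumes sig: "sigmoidal \<sigma>" and S1: "\<forall>x. \<sigma> (- x) - 1/2 = - (\<sigma> x - 1/2)"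
    and S3: "\<sigma> \<in> O[at_bot](\<lambda>x. \<bar>x\<bar> powr (- 1 - \<alpha>))"
    and cont: "continuous_on UNIV \<sigma>" and a: "\<alpha> > 0"
  shows "integrable lborel (phi_sigma \<sigma>)"
proof -
  have [measurable]: "\<sigma> \<in> borel_measurable borel" by (rule borel_measurable_continuous_onI[OF cont])
  have i: "integrable lborel (\<lambda>x. \<bar>x\<bar> powr 0 * phi_sigma \<sigma> x)"
    using phi_moment_integrable[OF sig S1 S3 cont, of 0] a by blast
  have "integrable lborel (\<lambda>x. indicator {-1..1} x * (1/2) + \<bar>x\<bar> powr 0 * phi_sigma \<sigma> x)"
    using i by (intro Bochner_Integration.integrable_add) auto
  then show ?thesis
  proof (rule Bochner_Integration.integrable_bound)
    show "phi_sigma \<sigma> \<in> borel_measurable lborel"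
      unfolding phi_sigma_def by measurable
    show "AE x in lborel. norm (phi_sigma \<sigma> x) \<le> norm (indicator {-1..1} x * (1/2) + \<bar>x\<bar> powr 0 * phi_sigma \<sigma> x)"
    proof (rule AE_I2)
      fix x
      have p0: "0 \<le> phi_sigma \<sigma> x" and p1: "phi_sigma \<sigma> x \<le> 1/2" using phi_basic[OF sig S1] by auto
      show "norm (phi_sigma \<sigma> x) \<le> norm (indicator {-1..1} x * (1/2) + \<bar>x\<bar> powr 0 * phi_sigma \<sigma> x)"
        using p0 p1 by (cases "x = 0") (auto simp: indicator_def)
    qed
  qed
qed

lemma fourier_int:
  fixes \<sigma> :: "real \<Rightarrow> real" and k :: int
  assumes sig: "sigmoidal \<sigma>" and S1: "\<forall>x. \<sigma> (- x) - 1/2 = - (\<sigma> x - 1/2)"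
    and cont: "continuous_on UNIV \<sigma>" and int: "integrable lborel (phi_sigma \<sigma>)"
  shows "fourier (phi_sigma \<sigma>) (2 * pi * of_int k) = (if k = 0 then 1 else 0)"
proof -
  have mono: "mono \<sigma>" and l1: "(\<sigma> \<longlongrightarrow> 1) at_top"
    using sig by (auto simp: sigmoidal_def)
  have [measurable]: "\<sigma> \<in> borel_measurable borel" by (rule borel_measurable_continuous_onI[OF cont])
  define v where "v = 2 * pi * of_int k"
  define e where "e x = exp (- \<i> * complex_of_real (x * v))" for x
  define g where "g x = complex_of_real (\<sigma> x) * e x" for x
  define A where "A t = (LINT x:{t-1<..t+1}|lborel. g x)" for t
  define L :: complex where "L = (if k = 0 then 2 else 0)"
  have ce: "continuous_on UNIV e" unfolding e_def by (intro continuous_intros)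
  have cg: "continuous_on UNIV g" unfolding g_def by (intro continuous_intros cont ce)
  have ne: "norm (e x) = 1" for x unfolding e_def by simp
  have eper: "e (x + of_int m) = e x" for x m unfolding e_def v_def by (rule exp_period)
  have eint: "(LINT x:{t-1<..t+1}|lborel. e x) = L" for t
  proof (cases "k = 0")
    case True
    then have "e x = 1" for x unfolding e_def v_def by simp
    then have "(LINT x:{t-1<..t+1}|lborel. e x) = (LINT x:{t-1<..t+1}|lborel. 1)" by simp
    also have "\<dots> = 2" by (subst set_integral_const) (auto simp: scaleR_conv_of_real)
    finally show ?thesis using True unfolding L_def by simp
  next
    case False
    then have v0: "v \<noteq> 0" unfolding v_def by simp
    define F where "F x = e x / (- \<i> * complex_of_real v)" for x
    have "(LINT x:{t-1<..t+1}|lborel. e x) = (LBINT x=t-1..t+1. e x)"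
      by (rule interval_integral_Ioc[symmetric]) simp
    also have "\<dots> = F (t+1) - F (t-1)"
    proof (rule interval_integral_FTC_finite)
      show "continuous_on {min (t - 1) (t + 1)..max (t - 1) (t + 1)} e"
        using ce by (rule continuous_on_subset) simp
      fix x
      have "((\<lambda>z. exp (- \<i> * (z * complex_of_real v)) / (- \<i> * complex_of_real v)) has_field_derivative
              exp (- \<i> * (complex_of_real x * complex_of_real v))) (at (complex_of_real x))"
        using v0 by (auto intro!: derivative_eq_intros simp: field_simps)
      from has_vector_derivative_real_field[OF this]
      show "(F has_vector_derivative e x) (at x within {min (t - 1) (t + 1)..max (t - 1) (t + 1)})"
        unfolding F_def e_def by simp
    qed
    also have "F (t+1) = F (t-1)"
      using eper[of "t-1" 2] unfolding F_def by (simp add: add.commute)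
    finally show ?thesis using False unfolding L_def by simp
  qed
  have sint: "set_integrable lborel {a<..b} h" if "continuous_on UNIV h" for a b and h :: "real \<Rightarrow> complex"
    by (rule cont_set_integrable[OF that])
  have sintr: "set_integrable lborel {a<..b} h" if "continuous_on UNIV h" for a b and h :: "real \<Rightarrow> real"
    by (rule cont_set_integrable[OF that])
  have l1': "((\<lambda>t. \<sigma> (t - 1)) \<longlongrightarrow> 1) at_top"
  proof -
    have "LIM t at_top. t - 1 :> (at_top :: real filter)"
    proof (subst filterlim_at_top, intro allI)
      fix Z :: real
      show "eventually (\<lambda>t. Z \<le> t - 1) at_top"
        unfolding eventually_at_top_linorder by (intro exI[of _ "Z+1"]) auto
    qed
    from filterlim_compose[OF l1 this] show ?thesis by simp
  qed
  have bnd: "norm (A t - L) \<le> 2 * (1 - \<sigma> (t - 1))" for t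
  proof -
    have "A t - L = (LINT x:{t-1<..t+1}|lborel. g x - e x)"
      unfolding A_def eint[of t, symmetric]
      by (rule set_integral_diff(2)[symmetric]; rule sint; intro cg ce)
    also have "norm \<dots> \<le> (LINT x:{t-1<..t+1}|lborel. norm (g x - e x))"
      by (rule set_integral_norm_bound, rule sint, intro continuous_intros cg ce)
    also have "\<dots> \<le> (LINT x:{t-1<..t+1}|lborel. (1 - \<sigma> (t - 1)))"
    proof (rule set_integral_mono)
      show "set_integrable lborel {t - 1<..t + 1} (\<lambda>x. norm (g x - e x))"
        by (rule sintr, intro continuous_intros cg ce)
      show "set_integrable lborel {t - 1<..t + 1} (\<lambda>x. 1 - \<sigma> (t - 1))"
        by (rule sintr, intro continuous_intros)
      fix x assume x: "x \<in> {t - 1<..t + 1}"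
      have "g x - e x = complex_of_real (\<sigma> x - 1) * e x" unfolding g_def by (simp add: algebra_simps)
      then have "norm (g x - e x) = 1 - \<sigma> x"
        using ne[of x] sig_basic[OF sig S1, of x] by (simp add: norm_mult del: of_real_diff)
      also have "\<dots> \<le> 1 - \<sigma> (t - 1)" using mono x by (auto simp: mono_def)
      finally show "norm (g x - e x) \<le> 1 - \<sigma> (t - 1)" .
    qed
    also have "\<dots> = 2 * (1 - \<sigma> (t - 1))" by (subst set_integral_const) auto
    finally show ?thesis .
  qed
  have Alim: "(A \<longlongrightarrow> L) at_top"
  proof -
    have "((\<lambda>t. 2 * (1 - \<sigma> (t - 1))) \<longlongrightarrow> 2 * (1 - 1)) at_top"
      by (intro tendsto_intros l1')
    then have z: "((\<lambda>t. 2 * (1 - \<sigma> (t - 1))) \<longlongrightarrow> 0) at_top" by simp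
    have "((\<lambda>t. A t - L) \<longlongrightarrow> 0) at_top"
      by (rule Lim_null_comparison[OF always_eventually[OF allI[OF bnd]] z])
    from tendsto_add[OF this tendsto_const[of L]] show ?thesis by simp
  qed
  have bnd2: "norm (A (- t)) \<le> 2 * (1 - \<sigma> (t - 1))" for t
  proof -
    have "norm (A (- t)) \<le> (LINT x:{-t-1<..-t+1}|lborel. norm (g x))"
      unfolding A_def by (rule set_integral_norm_bound, rule sint, intro continuous_intros cg ce)
    also have "\<dots> \<le> (LINT x:{-t-1<..-t+1}|lborel. \<sigma> (- t + 1))"
    proof (rule set_integral_mono)
      show "set_integrable lborel {-t - 1<..-t + 1} (\<lambda>x. norm (g x))"
        by (rule sintr, intro continuous_intros cg ce)
      show "set_integrable lborel {-t - 1<..-t + 1} (\<lambda>x. \<sigma> (- t + 1))"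
        by (rule sintr, intro continuous_intros)
      fix x assume x: "x \<in> {-t - 1<..-t + 1}"
      have "norm (g x) = \<sigma> x"
        using ne[of x] sig_basic[OF sig S1, of x] by (simp add: g_def norm_mult)
      also have "\<dots> \<le> \<sigma> (- t + 1)" using mono x by (auto simp: mono_def)
      finally show "norm (g x) \<le> \<sigma> (- t + 1)" .
    qed
    also have "\<dots> = 2 * \<sigma> (- t + 1)" by (subst set_integral_const) auto
    also have "\<sigma> (- t + 1) = 1 - \<sigma> (t - 1)" using sig_basic(3)[OF sig S1, of "t - 1"] by simp
    finally show ?thesis .
  qed
  have Blim: "((\<lambda>t. A (- t)) \<longlongrightarrow> 0) at_top"
  proof -
    have "((\<lambda>t. 2 * (1 - \<sigma> (t - 1))) \<longlongrightarrow> 2 * (1 - 1)) at_top"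
      by (intro tendsto_intros l1')
    then have z: "((\<lambda>t. 2 * (1 - \<sigma> (t - 1))) \<longlongrightarrow> 0) at_top" by simp
    show ?thesis
      by (rule Lim_null_comparison[OF always_eventually[OF allI[OF bnd2]] z])
  qed
  define I where "I t = (LINT x:{-t<..t}|lborel. complex_of_real (phi_sigma \<sigma> x) * e x)" for t
  have Iform: "I t = (A t - A (- t)) / 2" if t: "t \<ge> 1" for t
  proof -
    have ig: "complex_of_real (phi_sigma \<sigma> x) * e x = (1/2) * (g (x + 1) - g (x - 1))" for x
    proof -
      have "e (x + 1) = e x" using eper[of x 1] by simp
      moreover have "e (x - 1) = e x" using eper[of x "-1"] by simp
      ultimately have "(1/2) * (g (x + 1) - g (x - 1))
          = (1/2) * (complex_of_real (\<sigma> (x + 1)) * e x - complex_of_real (\<sigma> (x - 1)) * e x)"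
        unfolding g_def by simp
      then show ?thesis unfolding phi_sigma_def by (simp add: field_simps)
    qed
    have c1: "continuous_on UNIV (\<lambda>x. g (x + 1))" "continuous_on UNIV (\<lambda>x. g (x - 1))"
      by (intro continuous_on_compose2[OF cg] continuous_intros; simp)+
    have "I t = (1/2) * ((LINT x:{-t<..t}|lborel. g (x + 1)) - (LINT x:{-t<..t}|lborel. g (x - 1)))"
      unfolding I_def ig set_integral_mult_right
      by (subst set_integral_diff(2)) (auto intro: sint c1)
    also have "(LINT x:{-t<..t}|lborel. g (x + 1)) = (LINT y:{-t+1<..t+1}|lborel. g y)"
      by (rule shift_set_integral)
    also have "(LINT x:{-t<..t}|lborel. g (x - 1)) = (LINT x:{-t<..t}|lborel. g (x + (-1)))"
      by simp
    also have "\<dots> = (LINT y:{-t+(-1)<..t+(-1)}|lborel. g y)"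
      by (rule shift_set_integral)
    also have "{-t+1<..t+1} = {-t+1<..t-1} \<union> {t-1<..t+1}" using t by auto
    also have "(LINT y:{-t+1<..t-1} \<union> {t-1<..t+1}|lborel. g y) = (LINT y:{-t+1<..t-1}|lborel. g y) + A t"
      unfolding A_def by (rule set_integral_Un) (auto intro: sint cg)
    also have "{-t+(-1)<..t+(-1)} = {-t-1<..-t+1} \<union> {-t+1<..t-1}" using t by auto
    also have "(LINT y:{-t-1<..-t+1} \<union> {-t+1<..t-1}|lborel. g y) = A (-t) + (LINT y:{-t+1<..t-1}|lborel. g y)"
      unfolding A_def by (subst set_integral_Un) (auto intro: sint cg)
    finally show ?thesis by (simp add: field_simps)
  qed
  have Ilim1: "(I \<longlongrightarrow> (L - 0) / 2) at_top"
  proof (rule Lim_transform_eventually)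
    show "((\<lambda>t. (A t - A (- t)) / 2) \<longlongrightarrow> (L - 0) / 2) at_top"
      by (intro tendsto_intros Alim Blim) simp
    show "eventually (\<lambda>t. (A t - A (- t)) / 2 = I t) at_top"
      unfolding eventually_at_top_linorder by (auto intro!: exI[of _ 1] simp: Iform)
  qed
  have Ilim2: "(I \<longlongrightarrow> fourier (phi_sigma \<sigma>) v) at_top"
  proof -
    have "((\<lambda>t. integral\<^sup>L lborel (\<lambda>x. indicator {-t<..t} x *\<^sub>R (complex_of_real (phi_sigma \<sigma> x) * e x)))
        \<longlongrightarrow> integral\<^sup>L lborel (\<lambda>x. complex_of_real (phi_sigma \<sigma> x) * e x)) at_top"
    proof (rule integral_dominated_convergence_at_top[where w="phi_sigma \<sigma>"])
      show "(\<lambda>x. complex_of_real (phi_sigma \<sigma> x) * e x) \<in> borel_measurable lborel"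
        unfolding phi_sigma_def e_def by measurable
      show "(\<lambda>x. indicator {-t<..t} x *\<^sub>R (complex_of_real (phi_sigma \<sigma> x) * e x)) \<in> borel_measurable lborel" for t
        unfolding phi_sigma_def e_def by measurable
      show "integrable lborel (phi_sigma \<sigma>)" by (rule int)
      show "AE x in lborel. ((\<lambda>t. indicator {-t<..t} x *\<^sub>R (complex_of_real (phi_sigma \<sigma> x) * e x))
          \<longlongrightarrow> complex_of_real (phi_sigma \<sigma> x) * e x) at_top"
      proof (rule AE_I2, rule tendsto_eventually)
        fix x :: real
        show "eventually (\<lambda>t. indicator {-t<..t} x *\<^sub>R (complex_of_real (phi_sigma \<sigma> x) * e x)
           = complex_of_real (phi_sigma \<sigma> x) * e x) at_top"
          unfolding eventually_at_top_linorder
          by (auto intro!: exI[of _ "\<bar>x\<bar> + 1"] simp: indicator_def)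
      qed
      show "\<forall>\<^sub>F t in at_top. AE x in lborel. norm (indicator {-t<..t} x *\<^sub>R (complex_of_real (phi_sigma \<sigma> x) * e x)) \<le> phi_sigma \<sigma> x"
        using phi_basic[OF sig S1] ne by (auto simp: indicator_def norm_mult)
    qed
    then show ?thesis
      unfolding I_def set_lebesgue_integral_def fourier_def e_def by simp
  qed
  have "fourier (phi_sigma \<sigma>) v = (L - 0) / 2"
    using tendsto_unique[OF _ Ilim2 Ilim1] by simp
  then show ?thesis unfolding v_def L_def by (cases "k = 0") auto
qed

lemma cos_bound_powr:
  fixes t \<gamma> :: real
  assumes g: "1 < \<gamma>" "\<gamma> \<le> 2"
  shows "\<bar>cos t - 1\<bar> \<le> 2 * \<bar>t\<bar> powr \<gamma>"
proof (cases "\<bar>t\<bar> \<ge> 1")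
  case True
  have "\<bar>cos t - 1\<bar> \<le> 2" using abs_cos_le_one[of t] by linarith
  also have "2 \<le> 2 * \<bar>t\<bar> powr \<gamma>" using ge_one_powr_ge_zero[OF True, of \<gamma>] g by simp
  finally show ?thesis .
next
  case False
  have c: "cos t = 1 - 2 * sin (t/2) ^ 2" using cos_double_sin[of "t/2"] by simp
  have s: "sin (t/2) ^ 2 \<le> (t/2) ^ 2"
    using abs_sin_x_le_abs_x[of "t/2"] by (metis abs_ge_zero power2_abs power_mono)
  have "\<bar>cos t - 1\<bar> = 2 * sin (t/2) ^ 2" using c by simp
  also have "\<dots> \<le> 2 * (t/2) ^ 2" using s by simp
  also have "\<dots> \<le> 2 * \<bar>t\<bar> powr 2" by (simp add: power2_eq_square)
  also have "\<dots> \<le> 2 * \<bar>t\<bar> powr \<gamma>" using False g by (intro mult_left_mono powr_mono') auto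
  finally show ?thesis .
qed

lemma exp_minus_i_real:
  "exp (- \<i> * complex_of_real t) = complex_of_real (cos t) - \<i> * complex_of_real (sin t)"
proof -
  have "exp (- \<i> * complex_of_real t) = cis (- t)" by (simp add: cis_conv_exp)
  then show ?thesis by (simp add: complex_eq_iff)
qed

lemma odd_integral_zero:
  fixes f :: "real \<Rightarrow> real"
  assumes "\<And>x. f (- x) = - f x"
  shows "integral\<^sup>L lborel f = 0"
proof -
  have "integral\<^sup>L lborel f = \<bar>-1\<bar> *\<^sub>R (\<integral>x. f (0 + (-1) * x) \<partial>lborel)"
    by (rule lborel_integral_real_affine) simp
  also have "\<dots> = (\<integral>x. - f x \<partial>lborel)" using assms by simp
  also have "\<dots> = - integral\<^sup>L lborel f" by simp
  finally show ?thesis by simp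
qed

lemma fourier_deriv:
  fixes \<sigma> :: "real \<Rightarrow> real"
  assumes sig: "sigmoidal \<sigma>" and S1: "\<forall>x. \<sigma> (- x) - 1/2 = - (\<sigma> x - 1/2)"
    and S3: "\<sigma> \<in> O[at_bot](\<lambda>x. \<bar>x\<bar> powr (- 1 - \<alpha>))"
    and cont: "continuous_on UNIV \<sigma>" and alpha: "\<alpha> > 1"
    and int: "integrable lborel (phi_sigma \<sigma>)"
  shows "(fourier (phi_sigma \<sigma>) has_vector_derivative 0) (at 0)"
proof -
  have [measurable]: "\<sigma> \<in> borel_measurable borel" by (rule borel_measurable_continuous_onI[OF cont])
  define \<phi> where "\<phi> = phi_sigma \<sigma>"
  have [measurable]: "\<phi> \<in> borel_measurable borel" unfolding \<phi>_def phi_sigma_def by measurable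
  define \<gamma> where "\<gamma> = (1 + min \<alpha> 2) / 2"
  have g: "1 < \<gamma>" "\<gamma> \<le> 2" "\<gamma> < \<alpha>" "0 \<le> \<gamma>" using alpha unfolding \<gamma>_def by auto
  have im: "integrable lborel (\<lambda>x. \<bar>x\<bar> powr \<gamma> * \<phi> x)"
    unfolding \<phi>_def by (rule phi_moment_integrable[OF sig S1 S3 cont g(4) g(3)])
  have int': "integrable lborel \<phi>" using int unfolding \<phi>_def .
  have p0: "0 \<le> \<phi> x" for x unfolding \<phi>_def using phi_basic[OF sig S1] by auto
  have pev: "\<phi> (- x) = \<phi> x" for x unfolding \<phi>_def using phi_basic[OF sig S1] by auto
  define K where "K = integral\<^sup>L lborel (\<lambda>x. \<bar>x\<bar> powr \<gamma> * \<phi> x)"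
  define C where "C y = integral\<^sup>L lborel (\<lambda>x. \<phi> x * cos (x * y))" for y
  have ic: "integrable lborel (\<lambda>x. \<phi> x * cos (x * y))" for y
    by (rule Bochner_Integration.integrable_bound[OF int']) (auto intro!: AE_I2 mult_left_le simp: p0 abs_mult)
  have isn: "integrable lborel (\<lambda>x. \<phi> x * sin (x * y))" for y
    by (rule Bochner_Integration.integrable_bound[OF int']) (auto intro!: AE_I2 mult_left_le simp: p0 abs_mult)
  have F: "fourier \<phi> y = complex_of_real (C y)" for y
  proof -
    have "fourier \<phi> y = (LINT x|lborel. complex_of_real (\<phi> x * cos (x * y)) - \<i> * complex_of_real (\<phi> x * sin (x * y)))"
      unfolding fourier_def exp_minus_i_real by (simp add: algebra_simps)
    also have "\<dots> = (LINT x|lborel. complex_of_real (\<phi> x * cos (x * y))) - \<i> * (LINT x|lborel. complex_of_real (\<phi> x * sin (x * y)))"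
    proof -
      have c1: "integrable lborel (\<lambda>x. complex_of_real (\<phi> x * cos (x * y)))" using ic[of y] by (rule integrable_of_real)
      have c2: "integrable lborel (\<lambda>x. complex_of_real (\<phi> x * sin (x * y)))" using isn[of y] by (rule integrable_of_real)
      have c3: "integrable lborel (\<lambda>x. \<i> * complex_of_real (\<phi> x * sin (x * y)))" using c2 by simp
      show ?thesis by (subst Bochner_Integration.integral_diff[OF c1 c3]) simp
    qed
    also have "\<dots> = complex_of_real (C y) - \<i> * complex_of_real (integral\<^sup>L lborel (\<lambda>x. \<phi> x * sin (x * y)))"
      unfolding C_def integral_complex_of_real ..
    also have "integral\<^sup>L lborel (\<lambda>x. \<phi> x * sin (x * y)) = 0"
      by (rule odd_integral_zero) (simp add: pev)
    finally show ?thesis by simp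
  qed
  have bound: "\<bar>C y - C 0\<bar> \<le> 2 * \<bar>y\<bar> powr \<gamma> * K" for y
  proof -
    have "C y - C 0 = integral\<^sup>L lborel (\<lambda>x. \<phi> x * (cos (x * y) - 1))"
      unfolding C_def using ic[of y] int' by (simp add: algebra_simps)
    also have "\<bar>\<dots>\<bar> \<le> integral\<^sup>L lborel (\<lambda>x. norm (\<phi> x * (cos (x * y) - 1)))"
      using integral_norm_bound[of lborel "\<lambda>x. \<phi> x * (cos (x * y) - 1)"] by simp
    also have "\<dots> \<le> integral\<^sup>L lborel (\<lambda>x. (2 * \<bar>y\<bar> powr \<gamma>) * (\<bar>x\<bar> powr \<gamma> * \<phi> x))"
    proof (rule integral_mono)
      show "integrable lborel (\<lambda>x. norm (\<phi> x * (cos (x * y) - 1)))"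
        using ic[of y] int' by (intro integrable_norm) (simp add: algebra_simps)
      show "integrable lborel (\<lambda>x. (2 * \<bar>y\<bar> powr \<gamma>) * (\<bar>x\<bar> powr \<gamma> * \<phi> x))"
        using im by simp
      fix x
      have "norm (\<phi> x * (cos (x * y) - 1)) = \<phi> x * \<bar>cos (x * y) - 1\<bar>"
        using p0[of x] by (simp add: abs_mult)
      also have "\<dots> \<le> \<phi> x * (2 * \<bar>x * y\<bar> powr \<gamma>)"
        using p0[of x] cos_bound_powr[OF g(1) g(2), of "x * y"] by (intro mult_left_mono) auto
      also have "\<dots> = (2 * \<bar>y\<bar> powr \<gamma>) * (\<bar>x\<bar> powr \<gamma> * \<phi> x)"
        by (simp add: abs_mult powr_mult)
      finally show "norm (\<phi> x * (cos (x * y) - 1)) \<le> (2 * \<bar>y\<bar> powr \<gamma>) * (\<bar>x\<bar> powr \<gamma> * \<phi> x)" .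
    qed
    also have "\<dots> = 2 * \<bar>y\<bar> powr \<gamma> * K" unfolding K_def by simp
    finally show ?thesis .
  qed
  have lim0: "((\<lambda>y. 2 * K * \<bar>y\<bar> powr (\<gamma> - 1)) \<longlongrightarrow> 0) (at (0::real))"
  proof -
    have "((\<lambda>y::real. \<bar>y\<bar> powr (\<gamma> - 1)) \<longlongrightarrow> 0) (at 0)"
    proof (rule tendsto_zero_powrI)
      show "((\<lambda>y::real. \<bar>y\<bar>) \<longlongrightarrow> 0) (at 0)"
        using tendsto_rabs[OF tendsto_ident_at[of "0::real" UNIV]] by simp
    qed (use g in auto)
    from tendsto_mult[OF tendsto_const[of "2 * K"] this] show ?thesis by simp
  qed
  have "((\<lambda>y. norm ((fourier \<phi> y - fourier \<phi> 0) - y *\<^sub>R 0) / norm (y - 0)) \<longlongrightarrow> 0) (at 0)"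
  proof (rule Lim_null_comparison[OF always_eventually lim0], intro allI)
    fix y :: real
    show "norm (norm ((fourier \<phi> y - fourier \<phi> 0) - y *\<^sub>R 0) / norm (y - 0)) \<le> 2 * K * \<bar>y\<bar> powr (\<gamma> - 1)"
    proof (cases "y = 0")
      case True then show ?thesis by simp
    next
      case False
      have "norm (norm ((fourier \<phi> y - fourier \<phi> 0) - y *\<^sub>R 0) / norm (y - 0)) = \<bar>C y - C 0\<bar> / \<bar>y\<bar>"
        by (simp add: F flip: of_real_diff)
      also have "\<dots> \<le> 2 * \<bar>y\<bar> powr \<gamma> * K / \<bar>y\<bar>"
        using bound[of y] False by (intro divide_right_mono) auto
      also have "\<dots> = 2 * K * \<bar>y\<bar> powr (\<gamma> - 1)"
        using False by (simp add: powr_diff)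
      finally show ?thesis .
    qed
  qed
  then have "(fourier \<phi> has_derivative (\<lambda>h. h *\<^sub>R 0)) (at 0)"
    by (subst has_derivative_iff_norm) auto
  then show ?thesis unfolding has_vector_derivative_def \<phi>_def .
qed

theorem lemma4p1:
  fixes \<sigma> :: "real \<Rightarrow> real" and \<alpha> :: real
  assumes sig: "sigmoidal \<sigma>"
    and S1: "\<forall>x. \<sigma> (- x) - 1/2 = - (\<sigma> x - 1/2)"
    and S2: "C2_real \<sigma>" and S2c: "concave_on {0..} \<sigma>"
    and S3: "\<sigma> \<in> O[at_bot](\<lambda>x. \<bar>x\<bar> powr (- 1 - \<alpha>))"
    and alpha: "\<alpha> > 1"
  shows "fourier (phi_sigma \<sigma>) 0 = 1
    \<and> (\<forall>k::int. k \<noteq> 0 \<longrightarrow> fourier (phi_sigma \<sigma>) (2 * pi * of_int k) = 0)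
    \<and> (fourier (phi_sigma \<sigma>) has_vector_derivative 0) (at 0)"
proof -
  have cont: "continuous_on UNIV \<sigma>"
    using S2 unfolding C2_real_def
    by (auto intro!: continuous_at_imp_continuous_on differentiable_imp_continuous_within)
  have int: "integrable lborel (phi_sigma \<sigma>)"
    by (rule phi_integrable[OF sig S1 S3 cont]) (use alpha in simp)
  have "fourier (phi_sigma \<sigma>) 0 = 1"
    using fourier_int[OF sig S1 cont int, of 0] by simp
  moreover have "\<forall>k::int. k \<noteq> 0 \<longrightarrow> fourier (phi_sigma \<sigma>) (2 * pi * of_int k) = 0"
    using fourier_int[OF sig S1 cont int] by simp
  moreover have "(fourier (phi_sigma \<sigma>) has_vector_derivative 0) (at 0)"
    by (rule fourier_deriv[OF sig S1 S3 cont alpha int])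
  ultimately show ?thesis by blast
qed

end
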